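(* Let $n$ be one of the integers for which $\mathbb{Z}[\xi_n]$ has class number one, let $\mathcal{M}_n=\mathbb{Z}[\xi_n]$ with $\xi_n=\exp(2\pi i/n)$, and let $I$ be a principal ideal of $\mathcal{M}_n$ of finite index. Consider the Bravais coloring of $\mathcal{M}_n$ determined by $I$, with symmetry group $G=T(G)\rtimes D_N$ and color symmetry group $H$ (notation as in the context). Then $T(G)\le H$ and $\phi_1\in H$.
   Context: Standing assumption: $n\in\{3,4,5,7,8,9,11,12,13,15,16,17,19,20,21,24,25,27,28,32,33,35,36,40,44,45,48,60,84\}$ (the values for which $\mathcal{M}_n=\mathbb{Z}[\xi_n]$, $\xi_n=\exp(2\pi i/n)$, is a principal ideal domain). Let $\varphi$ be Euler's function and $N=n$ if $n$ is even, $N=2n$ if $n$ is odd. Using the $\mathbb{Z}$-basis $\{1,\xi_n,\dots,\xi_n^{\varphi(n)-1}\}$ of $\mathcal{M}_n$, each element is identified with its integer coordinate vector, so $\mathcal{M}_n$ becomes a lattice $\Lambda=\mathbb{Z}^{\varphi(n)}\subset\mathbb{R}^{\varphi(n)}$, and a principal ideal $I$ of index $\ell$ becomes a sublattice $L\subseteq\Lambda$ of index $\ell$. Let $\phi_1$ be the linear map of $\mathbb{R}^{\varphi(n)}$ induced by multiplication by $\exp(2\pi i/N)$ (an $N$-fold rotation, which preserves $\mathcal{M}_n$) and $\phi_2$ the linear map induced by complex conjugation (a reflection); they generate a group $D_N\cong$ dihedral group of order $2N$. Let $T(G)=\{t_y: x\mapsto x+y \mid y\in\Lambda\}$. The symmetry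 group of $\Lambda$ is $G=T(G)\rtimes D_N$. The Bravais coloring determined by $I$ assigns to each element of $\Lambda$ one of $\ell$ colors, two elements getting the same color iff they lie in the same coset of $L$ in $\Lambda$. The color symmetry group $H$ is the set of $g\in G$ that permute the colors, i.e. for every coset $x+L$ the image $g(x+L)$ is again a coset of $L$. The color fixing group $K$ is the set of $g\in H$ with $g(x+L)=x+L$ for every $x\in\Lambda$. *)

theory Defs
  imports "HOL-Analysis.Analysis"
begin

definition class_number_one_n :: "nat set" where
  "class_number_one_n = {3,4,5,7,8,9,11,12,13,15,16,17,19,20,21,24,25,27,28,32,33,35,36,40,44,45,48,60,84}"

definition xi :: "nat \<Rightarrow> complex" where
  "xi n = cis (2 * pi / real n)"

definition Mn :: "nat \<Rightarrow> complex set" where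
  "Mn n = {z. \<exists>(c :: nat \<Rightarrow> int) (k :: nat). z = (\<Sum>i<k. of_int (c i) * xi n ^ i)}"

definition bigN :: "nat \<Rightarrow> nat" where
  "bigN n = (if even n then n else 2 * n)"

definition principal_ideal :: "nat \<Rightarrow> complex \<Rightarrow> complex set" where
  "principal_ideal n a = (\<lambda>x. a * x) ` Mn n"

definition coset :: "complex \<Rightarrow> complex set \<Rightarrow> complex set" where
  "coset x L = (\<lambda>z. x + z) ` L"

definition phi1 :: "nat \<Rightarrow> complex \<Rightarrow> complex" where
  "phi1 n z = cis (2 * pi / real (bigN n)) * z"

definition phi2 :: "complex \<Rightarrow> complex" where
  "phi2 z = cnj z"

definition DN :: "nat \<Rightarrow> (complex \<Rightarrow> complex) set" where
  "DN n = {(phi1 n ^^ k) | k. True} \<union> {(phi1 n ^^ k) \<circ> phi2 | k. True}"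

definition translation :: "complex \<Rightarrow> complex \<Rightarrow> complex" where
  "translation y = (\<lambda>x. x + y)"

definition TG :: "nat \<Rightarrow> (complex \<Rightarrow> complex) set" where
  "TG n = translation ` Mn n"

definition symG :: "nat \<Rightarrow> (complex \<Rightarrow> complex) set" where
  "symG n = {t \<circ> d | t d. t \<in> TG n \<and> d \<in> DN n}"

definition color_symmetry_group :: "nat \<Rightarrow> complex set \<Rightarrow> (complex \<Rightarrow> complex) set" where
  "color_symmetry_group n L =
     {g \<in> symG n. \<forall>x \<in> Mn n. \<exists>y \<in> Mn n. g ` coset x L = coset y L}"

end

theory Submission
  imports Defs
begin

lemma Mn_add:
  assumes "x \<in> Mn n" "y \<in> Mn n" shows "x + y \<in> Mn n"
proof -
  obtain c k where x: "x = (\<Sum>i<k. of_int (c i) * xi n ^ i)" using assms(1) unfolding Mn_def by blast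
  obtain d l where y: "y = (\<Sum>i<l. of_int (d i) * xi n ^ i)" using assms(2) unfolding Mn_def by blast
  define m where "m = max k l"
  define e where "e = (\<lambda>i. (if i < k then c i else 0) + (if i < l then d i else 0))"
  have "x = (\<Sum>i<m. of_int (if i < k then c i else 0) * xi n ^ i)"
    unfolding x m_def by (rule sum.mono_neutral_cong_left) auto
  moreover have "y = (\<Sum>i<m. of_int (if i < l then d i else 0) * xi n ^ i)"
    unfolding y m_def by (rule sum.mono_neutral_cong_left) auto
  ultimately have "x + y = (\<Sum>i<m. of_int (e i) * xi n ^ i)"
    by (simp add: e_def sum.distrib[symmetric] distrib_right)
  then show ?thesis unfolding Mn_def by (intro CollectI exI[of _ e] exI[of _ m])
qed

lemma Mn_neg:
  assumes "x \<in> Mn n" shows "- x \<in> Mn n"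
proof -
  obtain c k where x: "x = (\<Sum>i<k. of_int (c i) * xi n ^ i)" using assms(1) unfolding Mn_def by blast
  have "- x = (\<Sum>i<k. of_int (- c i) * xi n ^ i)" unfolding x
    by (simp add: sum_negf[symmetric])
  then show ?thesis unfolding Mn_def by (intro CollectI exI[of _ "\<lambda>i. - c i"] exI[of _ k])
qed

lemma Mn_mult_xi:
  assumes "x \<in> Mn n" shows "xi n * x \<in> Mn n"
proof -
  obtain c k where x: "x = (\<Sum>i<k. of_int (c i) * xi n ^ i)" using assms(1) unfolding Mn_def by blast
  define d where "d = (\<lambda>i. if i = 0 then 0 else c (i - 1))"
  have "(\<Sum>i<Suc k. of_int (d i) * xi n ^ i) = (\<Sum>i<k. of_int (d (Suc i)) * xi n ^ (Suc i))"
    by (subst sum.lessThan_Suc_shift) (simp add: d_def)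
  also have "\<dots> = xi n * x" unfolding x by (simp add: d_def sum_distrib_left ac_simps)
  finally show ?thesis unfolding Mn_def by (intro CollectI exI[of _ d] exI[of _ "Suc k"]) simp
qed

lemma Mn_mult_xi_pow:
  assumes "x \<in> Mn n" shows "xi n ^ m * x \<in> Mn n"
  using assms
proof (induction m)
  case 0 then show ?case by simp
next
  case (Suc m)
  then have "xi n * (xi n ^ m * x) \<in> Mn n" by (intro Mn_mult_xi) auto
  then show ?case by (simp add: mult.assoc)
qed

definition om :: "nat \<Rightarrow> complex" where "om n = cis (2 * pi / real (bigN n))"

lemma om_form:
  assumes "n > 0" shows "\<exists>m. om n = xi n ^ m \<or> om n = - (xi n ^ m)"
proof (cases "even n")
  case True then show ?thesis by (auto simp: om_def bigN_def xi_def intro: exI[of _ 1])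
next
  case False
  then obtain j where j: "n = 2 * j + 1" by (metis oddE)
  have "xi n ^ (j + 1) = cis (real (j+1) * (2 * pi / real n))" unfolding xi_def by (rule Complex.DeMoivre)
  also have "real (j+1) * (2 * pi / real n) = pi + 2 * pi / real (bigN n)"
    using False j by (simp add: bigN_def field_simps)
  also have "cis (pi + 2 * pi / real (bigN n)) = - om n"
    by (simp add: om_def cis_mult[symmetric])
  finally show ?thesis by (metis minus_minus)
qed

lemma Mn_mult_om:
  assumes "n > 0" "x \<in> Mn n" shows "om n * x \<in> Mn n"
proof -
  obtain m where "om n = xi n ^ m \<or> om n = - (xi n ^ m)" using om_form[OF assms(1)] by blast
  then show ?thesis
  proof
    assume "om n = xi n ^ m" then show ?thesis using Mn_mult_xi_pow[OF assms(2), of m] by simp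
  next
    assume "om n = - (xi n ^ m)" then show ?thesis using Mn_neg[OF Mn_mult_xi_pow[OF assms(2), of m]] by simp
  qed
qed

lemma Mn_mult_om_pow:
  assumes "n > 0" "x \<in> Mn n" shows "om n ^ m * x \<in> Mn n"
  using assms(2)
proof (induction m)
  case 0 then show ?case by simp
next
  case (Suc m)
  then have "om n * (om n ^ m * x) \<in> Mn n" by (intro Mn_mult_om assms) auto
  then show ?case by (simp add: mult.assoc)
qed

lemma om_pow:
  assumes "n > 0" shows "om n ^ bigN n = 1"
proof -
  have "bigN n > 0" using assms by (simp add: bigN_def)
  have "om n ^ bigN n = cis (real (bigN n) * (2 * pi / real (bigN n)))"
    unfolding om_def by (rule Complex.DeMoivre)
  also have "real (bigN n) * (2 * pi / real (bigN n)) = 2 * pi" using \<open>bigN n > 0\<close> by simp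
  finally show ?thesis by simp
qed

lemma om_image:
  assumes "n > 0" shows "(\<lambda>m. om n * m) ` Mn n = Mn n"
proof
  show "(\<lambda>m. om n * m) ` Mn n \<subseteq> Mn n" using Mn_mult_om[OF assms] by auto
next
  show "Mn n \<subseteq> (\<lambda>m. om n * m) ` Mn n"
  proof
    fix z assume z: "z \<in> Mn n"
    have pos: "bigN n > 0" using assms by (simp add: bigN_def)
    have "om n * (om n ^ (bigN n - 1) * z) = om n ^ bigN n * z"
    proof -
      have "bigN n = Suc (bigN n - 1)" using pos by simp
      then have "om n ^ bigN n = om n * om n ^ (bigN n - 1)" by (metis power_Suc)
      then show ?thesis by (simp add: mult.assoc)
    qed
    then have "z = om n * (om n ^ (bigN n - 1) * z)" using om_pow[OF assms] by simp
    then show "z \<in> (\<lambda>m. om n * m) ` Mn n" using Mn_mult_om_pow[OF assms z] by blast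
  qed
qed

lemma phi1_img:
  "phi1 n ` coset x (principal_ideal n a) = (\<lambda>w. om n * x + a * w) ` ((\<lambda>m. om n * m) ` Mn n)"
proof -
  have "phi1 n ` coset x (principal_ideal n a) = (\<lambda>m. om n * (x + a * m)) ` Mn n"
    unfolding coset_def principal_ideal_def image_image phi1_def om_def ..
  also have "\<dots> = (\<lambda>w. om n * x + a * w) ` ((\<lambda>m. om n * m) ` Mn n)"
    unfolding image_image by (rule image_cong) (simp_all add: distrib_left mult.left_commute)
  finally show ?thesis .
qed

lemma phi1_coset:
  assumes "n > 0"
  shows "phi1 n ` coset x (principal_ideal n a) = coset (om n * x) (principal_ideal n a)"
  by (subst phi1_img) (simp only: om_image[OF assms] coset_def principal_ideal_def image_image)

lemma trans_H:
  assumes y: "y \<in> Mn n"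
  shows "translation y \<in> color_symmetry_group n L"
proof -
  have idD: "id \<in> DN n" unfolding DN_def by (auto intro: exI[of _ 0])
  have "translation y \<in> symG n" unfolding symG_def using y idD
    by (intro CollectI exI[of _ "translation y"] exI[of _ id]) (auto simp: TG_def)
  moreover have "translation y ` coset x L = coset (x + y) L" for x
    unfolding coset_def translation_def image_image by (simp add: ac_simps)
  moreover have "\<forall>x\<in>Mn n. \<exists>z\<in>Mn n. translation y ` coset x L = coset z L"
  proof
    fix x assume "x \<in> Mn n"
    then show "\<exists>z\<in>Mn n. translation y ` coset x L = coset z L"
      using Mn_add[OF _ y] \<open>\<And>x. translation y ` coset x L = coset (x + y) L\<close> by (intro bexI[of _ "x + y"]) auto
  qed
  ultimately show ?thesis unfolding color_symmetry_group_def by (intro CollectI conjI)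
qed

lemma phi1_H:
  assumes npos: "n > 0"
  shows "phi1 n \<in> color_symmetry_group n (principal_ideal n a)"
proof -
  have p1D: "phi1 n \<in> DN n" unfolding DN_def by (auto intro: exI[of _ 1])
  have t0: "translation 0 \<in> TG n" unfolding TG_def Mn_def
    by (rule imageI, rule CollectI, rule exI[of _ "\<lambda>_. 0"], rule exI[of _ 0]) simp
  have "phi1 n = translation 0 \<circ> phi1 n" by (auto simp: translation_def)
  then have "phi1 n \<in> symG n" unfolding symG_def using t0 p1D by blast
  moreover have "\<forall>x\<in>Mn n. \<exists>z\<in>Mn n. phi1 n ` coset x (principal_ideal n a) = coset z (principal_ideal n a)"
  proof
    fix x assume "x \<in> Mn n"
    then show "\<exists>z\<in>Mn n. phi1 n ` coset x (principal_ideal n a) = coset z (principal_ideal n a)"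
      using Mn_mult_om[OF npos] phi1_coset[OF npos] by (intro bexI[of _ "om n * x"]) auto
  qed
  ultimately show ?thesis unfolding color_symmetry_group_def by (intro CollectI conjI)
qed

theorem theorem3p1p1:
  fixes n :: nat and a :: complex
  assumes "n \<in> class_number_one_n"
    and "a \<in> Mn n"
    and "finite {coset x (principal_ideal n a) | x. x \<in> Mn n}"
  shows "TG n \<subseteq> color_symmetry_group n (principal_ideal n a)
       \<and> phi1 n \<in> color_symmetry_group n (principal_ideal n a)"
proof
  have npos: "n > 0" proof (rule ccontr)
    assume "\<not> n > 0" then have "n = 0" by simp
    then show False using assms(1) unfolding class_number_one_n_def by simp
  qed
  then show "phi1 n \<in> color_symmetry_group n (principal_ideal n a)" by (rule phi1_H)
  show "TG n \<subseteq> color_symmetry_group n (principal_ideal n a)"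
  proof
    fix g assume "g \<in> TG n"
    then obtain y where "y \<in> Mn n" "g = translation y" unfolding TG_def by blast
    then show "g \<in> color_symmetry_group n (principal_ideal n a)" using trans_H by simp
  qed
qed

end
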